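(* Let $a<b$ and $f\in C([a,b])$. Then for every $\varepsilon>0$ there exists a function $\phi$ generated by a $\sigma$-activated network with width $36$ and depth $5$ such that $|\phi(x)-f(x)|<\varepsilon$ for all $x\in[a,b]$.
   Context: Let $\sigma_1:\mathbb{R}\to\mathbb{R}$ be the continuous triangular-wave function of period $2$: $\sigma_1(x)=|x|$ for $x\in[-1,1]$, $\sigma_1(x+2)=\sigma_1(x)$. Let $\sigma_2(x)=x/(|x|+1)$. The activation function is $\sigma(x)=\sigma_1(x)$ for $x\ge0$ and $\sigma(x)=\sigma_2(x)$ for $x<0$, applied entrywise. A function generated by a $\sigma$-activated network with input dimension $n$, width $N$ and depth $L$ is a function of the form $\mathcal{L}_{\ell}\circ\sigma\circ\mathcal{L}_{\ell-1}\circ\cdots\circ\sigma\circ\mathcal{L}_0$ with $\ell\le L$ hidden layers, where $\mathcal{L}_0:\mathbb{R}^n\to\mathbb{R}^{N_1}$, $\mathcal{L}_i:\mathbb{R}^{N_i}\to\mathbb{R}^{N_{i+1}}$, $\mathcal{L}_\ell:\mathbb{R}^{N_\ell}\to\mathbb{R}$ are affine maps and each $N_i\le N$. *)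

theory Defs
  imports "HOL-Analysis.Analysis"
begin

text \<open>Triangular wave of period 2: sigma1 x = |x| on [-1,1], sigma1 (x+2) = sigma1 x.
  Explicitly, sigma1 x = |x - 2 * round(x/2)| where the shift 2k brings x into [-1,1].\<close>
definition sigma1 :: "real \<Rightarrow> real" where
  "sigma1 x = \<bar>x - 2 * of_int \<lfloor>(x + 1) / 2\<rfloor>\<bar>"

definition sigma2 :: "real \<Rightarrow> real" where
  "sigma2 x = x / (\<bar>x\<bar> + 1)"

definition act :: "real \<Rightarrow> real" where
  "act x = (if x \<ge> 0 then sigma1 x else sigma2 x)"

text \<open>Vectors in R^m are represented as functions nat => real, with only the
  indices < m being relevant. An affine map R^m -> R^k is a pair (W, c) with
  W i j the weight from input j to output i and c the bias.\<close>
definition affine_apply :: "nat \<Rightarrow> (nat \<Rightarrow> nat \<Rightarrow> real) \<Rightarrow> (nat \<Rightarrow> real) \<Rightarrow> (nat \<Rightarrow> real) \<Rightarrow> (nat \<Rightarrow> real)" where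
  "affine_apply m W c v = (\<lambda>i. (\<Sum>j<m. W i j * v j) + c i)"

text \<open>A hidden layer is (N, W, c): output width N, affine map W,c, then entrywise act.
  hidden_eval m Ls v feeds a vector of dimension m through the hidden layers and
  returns the resulting vector together with its dimension.\<close>
fun hidden_eval :: "nat \<Rightarrow> (nat \<times> (nat \<Rightarrow> nat \<Rightarrow> real) \<times> (nat \<Rightarrow> real)) list \<Rightarrow> (nat \<Rightarrow> real) \<Rightarrow> nat \<times> (nat \<Rightarrow> real)" where
  "hidden_eval m [] v = (m, v)"
| "hidden_eval m ((N, W, c) # Ls) v = hidden_eval N Ls (\<lambda>i. act (affine_apply m W c v i))"

definition net_eval :: "nat \<Rightarrow> (nat \<times> (nat \<Rightarrow> nat \<Rightarrow> real) \<times> (nat \<Rightarrow> real)) list \<Rightarrow> (nat \<Rightarrow> real) \<Rightarrow> real \<Rightarrow> (nat \<Rightarrow> real) \<Rightarrow> real" where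
  "net_eval n Ls w b v = (let (m, u) = hidden_eval n Ls v in (\<Sum>j<m. w j * u j) + b)"

definition generated_by_net :: "nat \<Rightarrow> nat \<Rightarrow> nat \<Rightarrow> ((nat \<Rightarrow> real) \<Rightarrow> real) \<Rightarrow> bool" where
  "generated_by_net n N L phi \<longleftrightarrow>
     (\<exists>Ls w b. length Ls \<le> L \<and> (\<forall>l\<in>set Ls. 1 \<le> fst l \<and> fst l \<le> N) \<and>
        (\<forall>v. phi v = net_eval n Ls w b (\<lambda>j. if j < n then v j else 0)))"

end

theory Submission
  imports Defs "HOL-Computational_Algebra.Polynomial" "HOL-Analysis.Kronecker_Approximation_Theorem"
begin


lemma s1_eq:
  fixes j :: int and y :: real assumes "\<bar>y - 2 * of_int j\<bar> \<le> 1" shows "sigma1 y = \<bar>y - 2 * of_int j\<bar>"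
proof (cases "y - 2 * of_int j < 1")
  case True
  have "\<lfloor>(y + 1) / 2\<rfloor> = j" using True assms by (subst floor_unique) (auto simp: field_simps abs_le_iff)
  then show ?thesis by (simp add: sigma1_def)
next
  case False
  then have y: "y = 2 * of_int j + 1" using assms by (auto simp: abs_le_iff)
  have "\<lfloor>(y + 1) / 2\<rfloor> = j + 1" unfolding y by (subst floor_unique) (auto simp: field_simps)
  then show ?thesis using y by (simp add: sigma1_def)
qed

lemma s1_def_bound: fixes y :: real shows "\<bar>y - 2 * of_int \<lfloor>(y + 1) / 2\<rfloor>\<bar> \<le> 1"
proof -
  have "of_int \<lfloor>(y + 1) / 2\<rfloor> \<le> (y+1)/2" by linarith
  moreover have "(y+1)/2 < of_int \<lfloor>(y + 1) / 2\<rfloor> + 1" by linarith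
  ultimately show ?thesis by (auto simp: abs_le_iff field_simps)
qed

lemma s1_range: "0 \<le> sigma1 y" "sigma1 y \<le> 1"
  using s1_def_bound[of y] by (auto simp: sigma1_def)

lemma s1_le: fixes j :: int shows "sigma1 y \<le> \<bar>y - 2 * of_int j\<bar>"
proof (cases "\<bar>y - 2 * of_int j\<bar> \<le> 1")
  case True then show ?thesis using s1_eq by simp
next
  case False then show ?thesis using s1_range[of y] by linarith
qed

lemma s1_lip1: "sigma1 y \<le> sigma1 z + \<bar>y - z\<bar>"
proof -
  define k where "k = \<lfloor>(z + 1) / 2\<rfloor>"
  have "sigma1 z = \<bar>z - 2 * of_int k\<bar>" by (simp add: sigma1_def k_def)
  moreover have "sigma1 y \<le> \<bar>y - 2 * of_int k\<bar>" by (rule s1_le)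
  ultimately show ?thesis by linarith
qed

lemma s1_lip: "\<bar>sigma1 y - sigma1 z\<bar> \<le> \<bar>y - z\<bar>"
  using s1_lip1[of y z] s1_lip1[of z y] by (auto simp: abs_le_iff abs_minus_commute)

lemma s1_even: "sigma1 (-y) = sigma1 y"
proof -
  define k where "k = \<lfloor>(y + 1) / 2\<rfloor>"
  have e: "sigma1 y = \<bar>y - 2 * of_int k\<bar>" by (simp add: sigma1_def k_def)
  have b: "\<bar>y - 2 * of_int k\<bar> \<le> 1" using s1_def_bound[of y] by (simp add: k_def)
  have "sigma1 (-y) = \<bar>-y - 2 * of_int (-k)\<bar>" by (rule s1_eq) (use b in \<open>auto simp: abs_le_iff\<close>)
  then show ?thesis using e by simp
qed

lemma s1_per: fixes j :: int shows "sigma1 (y + 2 * of_int j) = sigma1 y"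
proof -
  define k where "k = \<lfloor>(y + 1) / 2\<rfloor>"
  have e: "sigma1 y = \<bar>y - 2 * of_int k\<bar>" by (simp add: sigma1_def k_def)
  have b: "\<bar>y - 2 * of_int k\<bar> \<le> 1" using s1_def_bound[of y] by (simp add: k_def)
  have "sigma1 (y + 2 * of_int j) = \<bar>y + 2 * of_int j - 2 * of_int (k + j)\<bar>" by (rule s1_eq) (use b in \<open>auto simp: abs_le_iff\<close>)
  then show ?thesis using e by simp
qed

lemma act_id: "0 \<le> x \<Longrightarrow> x \<le> 1 \<Longrightarrow> act x = x"
  using s1_eq[of x 0] by (simp add: act_def)

lemma act_pos: "0 \<le> x \<Longrightarrow> act x = sigma1 x"
  by (simp add: act_def)

lemma act_neg: "0 < y \<Longrightarrow> act (-y) = 1 / (y + 1) - 1"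
  by (simp add: act_def sigma2_def field_simps)

lemma act_abs: "\<bar>z\<bar> \<le> 1 \<Longrightarrow> act (z + 2) = \<bar>z\<bar>"
  using s1_eq[of "z+2" 1] by (auto simp: act_def abs_le_iff)

definition G0 :: "real \<Rightarrow> real" where "G0 y = y - sigma1 y"

lemma G0_nonneg: "0 \<le> y \<Longrightarrow> 0 \<le> G0 y"
proof -
  assume y: "0 \<le> y"
  show ?thesis
  proof (cases "y \<le> 1")
    case True then show ?thesis using s1_eq[of y 0] y by (simp add: G0_def)
  next
    case False then show ?thesis using s1_range[of y] by (simp add: G0_def)
  qed
qed

lemma G0_le: "0 \<le> y \<Longrightarrow> G0 y \<le> y"
  using s1_range[of y] by (simp add: G0_def)

lemma G0_plat: "0 \<le> r \<Longrightarrow> r \<le> 1 \<Longrightarrow> G0 (2 * real m + r) = 2 * real m"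
  using s1_eq[of "2 * real m + r" "int m"] by (simp add: G0_def)

lemma G0G0: assumes "0 \<le> r" "r \<le> 3/2" shows "G0 (G0 (2 * real m + r)) = 2 * real m"
proof (cases "r \<le> 1")
  case True then show ?thesis using G0_plat[of r m] G0_plat[of 0 m] assms by simp
next
  case False
  have "G0 (2 * real m + r) = 2 * real m + (2*r - 2)"
    using s1_eq[of "2 * real m + r" "int m + 1"] False assms by (auto simp: G0_def abs_le_iff)
  then show ?thesis using G0_plat[of "2*r-2" m] False assms by simp
qed



lemma exists_c:
  "\<exists>c::real. 1 < c \<and> c < 2 \<and> (\<forall>ks::int list. length ks = n \<longrightarrow>
      (\<Sum>i<n. of_int (ks!i) / (real i + c)) = 0 \<longrightarrow> (\<forall>i<n. ks!i = 0))"
proof -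
  define P :: "int list \<Rightarrow> real poly" where
    "P ks = (\<Sum>i<n. smult (of_int (ks!i)) (\<Prod>j\<in>{..<n}-{i}. [:real j, 1:]))" for ks
  have eval: "poly (P ks) c = (\<Prod>j<n. (real j + c)) * (\<Sum>i<n. of_int (ks!i) / (real i + c))"
    if "1 < c" for ks c
  proof -
    have "poly (P ks) c = (\<Sum>i<n. of_int (ks!i) * (\<Prod>j\<in>{..<n}-{i}. (real j + c)))"
      by (simp add: P_def poly_sum poly_prod add.commute)
    also have "\<dots> = (\<Sum>i<n. (\<Prod>j<n. (real j + c)) * (of_int (ks!i) / (real i + c)))"
    proof (rule sum.cong[OF refl])
      fix i assume i: "i \<in> {..<n}"
      have "(\<Prod>j<n. (real j + c)) = (real i + c) * (\<Prod>j\<in>{..<n}-{i}. (real j + c))"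
        using i by (simp add: prod.remove)
      moreover have "real i + c \<noteq> 0" using that by linarith
      ultimately show "of_int (ks!i) * (\<Prod>j\<in>{..<n}-{i}. (real j + c)) =
          (\<Prod>j<n. (real j + c)) * (of_int (ks!i) / (real i + c))" by (simp add: field_simps)
    qed
    also have "\<dots> = (\<Prod>j<n. (real j + c)) * (\<Sum>i<n. of_int (ks!i) / (real i + c))"
      by (simp add: sum_distrib_left)
    finally show ?thesis .
  qed
  have nz: "P ks \<noteq> 0" if "i0 < n" "ks!i0 \<noteq> 0" for ks i0
  proof
    assume "P ks = 0"
    then have "poly (P ks) (- real i0) = 0" by simp
    moreover have "poly (P ks) (- real i0) = of_int (ks!i0) * (\<Prod>j\<in>{..<n}-{i0}. (real j - real i0))"
    proof -
      have "poly (P ks) (- real i0) = (\<Sum>i<n. of_int (ks!i) * (\<Prod>j\<in>{..<n}-{i}. (real j - real i0)))"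
        by (simp add: P_def poly_sum poly_prod)
      also have "\<dots> = of_int (ks!i0) * (\<Prod>j\<in>{..<n}-{i0}. (real j - real i0))
           + (\<Sum>i\<in>{..<n}-{i0}. of_int (ks!i) * (\<Prod>j\<in>{..<n}-{i}. (real j - real i0)))"
        using that by (simp add: sum.remove)
      also have "(\<Sum>i\<in>{..<n}-{i0}. of_int (ks!i) * (\<Prod>j\<in>{..<n}-{i}. (real j - real i0))) = 0"
      proof (rule sum.neutral, rule ballI)
        fix i assume "i \<in> {..<n}-{i0}"
        then have "i0 \<in> {..<n}-{i}" using that by auto
        then have "(\<Prod>j\<in>{..<n}-{i}. (real j - real i0)) = 0"
          by (intro prod_zero) auto
        then show "of_int (ks!i) * (\<Prod>j\<in>{..<n}-{i}. (real j - real i0)) = 0" by simp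
      qed
      finally show ?thesis by simp
    qed
    moreover have "(\<Prod>j\<in>{..<n}-{i0}. (real j - real i0)) \<noteq> 0"
      by (subst prod_zero_iff) auto
    ultimately show False using that by simp
  qed
  define I where "I = {ks::int list. length ks = n \<and> (\<exists>i<n. ks!i \<noteq> 0)}"
  define Bad where "Bad = (\<Union>ks\<in>I. {c. poly (P ks) c = 0})"
  have "countable Bad"
    unfolding Bad_def
  proof (rule countable_UN)
    show "countable I" by (rule countableI_type)
    fix ks assume "ks \<in> I"
    then show "countable {c. poly (P ks) c = 0}"
      using nz poly_roots_finite unfolding I_def by (blast intro: countable_finite)
  qed
  then have "uncountable ({1<..<2::real} - Bad)"
    by (intro uncountable_minus_countable) (simp add: uncountable_open_interval)
  then obtain c where c: "c \<in> {1<..<2::real} - Bad"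
    by (metis uncountable_infinite ex_in_conv finite.emptyI)
  show ?thesis
  proof (intro exI conjI allI impI)
    show "1 < c" "c < 2" using c by auto
    fix ks :: "int list" and i assume len: "length ks = n" and s: "(\<Sum>i<n. of_int (ks!i) / (real i + c)) = 0"
       and i: "i < n"
    show "ks!i = 0"
    proof (rule ccontr)
      assume "ks!i \<noteq> 0"
      then have "ks \<in> I" using len i by (auto simp: I_def)
      moreover have "poly (P ks) c = 0" using eval[of c ks] s c by simp
      ultimately show False using c by (auto simp: Bad_def)
    qed
  qed
qed



lemma memo:
  fixes c :: real and z :: "nat \<Rightarrow> real"
  assumes c1: "1 < c"
    and cind: "\<forall>ks::int list. length ks = Suc M \<longrightarrow>
      (\<Sum>i<Suc M. of_int (ks!i) / (real i + c)) = 0 \<longrightarrow> (\<forall>i<Suc M. ks!i = 0)"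
    and z: "\<And>m. m \<le> M \<Longrightarrow> 0 \<le> z m \<and> z m \<le> 1" and e: "e > 0"
  shows "\<exists>s\<ge>0. \<forall>m\<le>M. \<bar>sigma1 (s / (real m + c)) - z m\<bar> < e"
proof -
  define \<theta> where "\<theta> i = 1 / (real i + c)" for i
  define n where "n = Suc M"
  interpret md: Modules.module "(\<lambda>r. (*) (real_of_int r))"
    by (simp add: Modules.module.intro distrib_left mult.commute)
  have injt: "inj_on \<theta> {..<n}"
    using c1 by (auto simp: inj_on_def \<theta>_def field_simps)
  have indp: "md.independent (\<theta> ` {..<n})"
  proof
    assume "md.dependent (\<theta> ` {..<n})"
    then obtain u where u: "\<exists>v\<in>\<theta> ` {..<n}. u v \<noteq> 0"
        and s: "(\<Sum>v\<in>\<theta> ` {..<n}. real_of_int (u v) * v) = 0"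
      by (auto simp: md.dependent_finite)
    define ks where "ks = map (\<lambda>i. u (\<theta> i)) [0..<n]"
    have len: "length ks = Suc M" by (simp add: ks_def n_def)
    have "(\<Sum>i<n. real_of_int (u (\<theta> i)) * \<theta> i) = 0"
      using s by (simp add: sum.reindex[OF injt])
    moreover have "(\<Sum>i<Suc M. of_int (ks!i) / (real i + c)) = (\<Sum>i<n. real_of_int (u (\<theta> i)) * \<theta> i)"
      unfolding n_def by (rule sum.cong) (simp_all add: ks_def n_def \<theta>_def del: upt_Suc)
    ultimately have "(\<Sum>i<Suc M. of_int (ks!i) / (real i + c)) = 0" by simp
    then have "\<forall>i<Suc M. ks!i = 0" using cind len by blast
    moreover have "\<And>i. i < Suc M \<Longrightarrow> ks!i = u (\<theta> i)" by (simp add: ks_def n_def del: upt_Suc)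
    ultimately show False using u by (auto simp: n_def)
  qed
  obtain t h where th: "\<And>i. i < n \<Longrightarrow> \<bar>t * \<theta> i - of_int (h i) - z i / 2\<bar> < e / 2"
    using Kronecker_thm_1[OF indp injt, of "e/2" "\<lambda>i. z i / 2"] e by auto
  show ?thesis
  proof (intro exI conjI allI impI)
    show "0 \<le> 2 * \<bar>t\<bar>" by simp
    fix m assume m: "m \<le> M"
    then have mn: "m < n" by (simp add: n_def)
    have "sigma1 (2 * \<bar>t\<bar> / (real m + c)) = sigma1 (2 * t * \<theta> m)"
    proof (cases "t \<ge> 0")
      case True then show ?thesis by (simp add: \<theta>_def)
    next
      case False
      then have "2 * \<bar>t\<bar> / (real m + c) = - (2 * t * \<theta> m)" by (simp add: \<theta>_def)
      then show ?thesis by (simp add: s1_even)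
    qed
    also have "\<dots> = sigma1 ((2 * t * \<theta> m - 2 * of_int (h m)) + 2 * of_int (h m))" by simp
    also have "\<dots> = sigma1 (2 * t * \<theta> m - 2 * of_int (h m))" by (rule s1_per)
    finally have eq: "sigma1 (2 * \<bar>t\<bar> / (real m + c)) = sigma1 (2 * t * \<theta> m - 2 * of_int (h m))" .
    have zz: "sigma1 (z m) = z m" using s1_eq[of "z m" 0] z[OF m] by simp
    have "\<bar>sigma1 (2 * t * \<theta> m - 2 * of_int (h m)) - sigma1 (z m)\<bar> \<le> \<bar>2 * t * \<theta> m - 2 * of_int (h m) - z m\<bar>"
      by (rule s1_lip)
    also have "\<dots> = \<bar>2 * (t * \<theta> m - of_int (h m) - z m / 2)\<bar>" by (simp add: algebra_simps)
    also have "\<dots> = 2 * \<bar>t * \<theta> m - of_int (h m) - z m / 2\<bar>" by (simp only: abs_mult)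
    also have "\<dots> < e" using th[OF mn] by simp
    finally show "\<bar>sigma1 (2 * \<bar>t\<bar> / (real m + c)) - z m\<bar> < e" using eq zz by simp
  qed
qed



lemma affine_cong: "(\<forall>j<m. v j = v' j) \<Longrightarrow> affine_apply m W c v i = affine_apply m W c v' i"
  by (simp add: affine_apply_def)

lemma hidden_cong: "(\<forall>j<m. v j = v' j) \<Longrightarrow> fst (hidden_eval m Ls v) = fst (hidden_eval m Ls v') \<and>
   (\<forall>j<fst (hidden_eval m Ls v). snd (hidden_eval m Ls v) j = snd (hidden_eval m Ls v') j)"
proof (induction Ls arbitrary: m v v')
  case Nil then show ?case by simp
next
  case (Cons l Ls)
  obtain N W c where l: "l = (N, W, c)" by (cases l) auto
  have "\<forall>i<N. act (affine_apply m W c v i) = act (affine_apply m W c v' i)"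
    using affine_cong[OF Cons.prems] by simp
  from Cons.IH[OF this] show ?case by (simp add: l)
qed

lemma net_cong: "(\<forall>j<m. v j = v' j) \<Longrightarrow> net_eval m Ls w b v = net_eval m Ls w b v'"
  using hidden_cong[of m v v' Ls] unfolding net_eval_def
  by (auto simp: case_prod_beta intro!: sum.cong)

lemma net_step: "(\<forall>i<N. v' i = act (affine_apply m W c v i)) \<Longrightarrow>
   net_eval m ((N, W, c) # Ls) w b v = net_eval N Ls w b v'"
  unfolding net_eval_def using hidden_cong[of N "\<lambda>i. act (affine_apply m W c v i)" v' Ls]
  by (auto simp: case_prod_beta intro!: sum.cong)

lemma net_nil: "net_eval m [] w b v = (\<Sum>j<m. w j * v j) + b"
  by (simp add: net_eval_def)



definition vec :: "real list \<Rightarrow> nat \<Rightarrow> real" where "vec l i = l ! i"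
definition mat :: "real list list \<Rightarrow> nat \<Rightarrow> nat \<Rightarrow> real" where "mat R i j = R ! i ! j"

definition lay1 :: "real \<Rightarrow> real \<Rightarrow> real \<Rightarrow> nat \<times> (nat \<Rightarrow> nat \<Rightarrow> real) \<times> (nat \<Rightarrow> real)" where
  "lay1 a b U = (4, mat [[1/(b-a)], [U/(b-a)], [U/(b-a)], [U/(b-a)]],
     vec [-a/(b-a), -U*a/(b-a), -U*a/(b-a) + 1, -U*a/(b-a) + 5/4])"

definition lay2 :: "real \<Rightarrow> nat \<times> (nat \<Rightarrow> nat \<Rightarrow> real) \<times> (nat \<Rightarrow> real)" where
  "lay2 U = (7, mat [[U/(U+1), -1/(U+1), 0, 0], [U, -1, 0, 0], [U/(U+1), 0, -1/(U+1), 0], [U, 0, -1, 0],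
        [0,0,0,1], [0,0,0,1], [0,0,0,-1]],
     vec [0, 0, 1/(U+1), 1, 0, 11/8, 19/8])"

definition lay3 :: "real \<Rightarrow> real \<Rightarrow> nat \<times> (nat \<Rightarrow> nat \<Rightarrow> real) \<times> (nat \<Rightarrow> real)" where
  "lay3 U c = (4, mat [[-(U+1)/2, 1/2, 0,0,0,0,0], [0,0,-(U+1)/2,1/2,0,0,0], [0,0,0,0,4/3,4/3,0], [0,0,0,0,-4/3,0,4/3]],
     vec [1-c, 1-c, -5/6, 1/2])"

definition lay4 :: "real \<Rightarrow> real \<Rightarrow> nat \<times> (nat \<Rightarrow> nat \<Rightarrow> real) \<times> (nat \<Rightarrow> real)" where
  "lay4 s1 s2 = (4, mat [[s1,0,0,0],[0,s2,0,0],[0,0,1,0],[0,0,0,1]], vec [s1, s2, 0, 0])"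

definition lay5 :: "nat \<times> (nat \<Rightarrow> nat \<Rightarrow> real) \<times> (nat \<Rightarrow> real)" where
  "lay5 = (2, mat [[1/4,-1/4,-3/4,3/4],[1/8,1/8,-3/8,-3/8]], vec [2, 3/4])"

lemma less4: "i < (4::nat) \<Longrightarrow> i = 0 \<or> i = 1 \<or> i = 2 \<or> i = 3" by auto
lemma less7: "i < (7::nat) \<Longrightarrow> i = 0 \<or> i = 1 \<or> i = 2 \<or> i = 3 \<or> i = 4 \<or> i = 5 \<or> i = 6" by auto

lemma net_value:
  fixes a b U c s1 s2 al be x :: real
  assumes ab: "a < b" and U: "U > 0" and c: "c > 1" and s: "s1 \<ge> 0" "s2 \<ge> 0"
    and x: "a \<le> x" "x \<le> b"
  defines "u \<equiv> U * (x - a) / (b - a)"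
  defines "d \<equiv> sigma1 (u + 5/4)"
  defines "X \<equiv> sigma1 (s1 / (G0 (G0 u) / 2 + c)) - 4 * (d - 5/8 + \<bar>d - 5/8\<bar>)"
  defines "Y \<equiv> sigma1 (s2 / (G0 (G0 (u+1)) / 2 + c)) - 4 * (3/8 - d + \<bar>3/8 - d\<bar>)"
  shows "net_eval 1 [lay1 a b U, lay2 U, lay3 U c, lay4 s1 s2, lay5] (vec [2*al, 4*al]) (be - 3*al)
           (\<lambda>j. if j < 1 then x else 0) = al * max X Y + be"
proof -
  have u0: "0 \<le> u" using ab U x by (simp add: u_def)
  have uU: "u \<le> U" using ab U x by (simp add: u_def field_simps)
  have d01: "0 \<le> d" "d \<le> 1" using s1_range by (auto simp: d_def)
  define v1 where "v1 = vec [u/U, sigma1 u, sigma1 (u+1), d]"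
  define A1 where "A1 = affine_apply 1 (mat [[1/(b-a)], [U/(b-a)], [U/(b-a)], [U/(b-a)]])
     (vec [-a/(b-a), -U*a/(b-a), -U*a/(b-a) + 1, -U*a/(b-a) + 5/4]) (\<lambda>j. if j < 1 then x else 0)"
  have st1: "\<forall>i<4. v1 i = act (A1 i)"
  proof (intro allI impI)
    fix i :: nat assume "i < 4"
    then consider "i = 0" | "i = 1" | "i = 2" | "i = 3" using less4 by blast
    then show "v1 i = act (A1 i)"
    proof cases
      case 1
      have "A1 i = u/U" using 1 ab U by (simp add: A1_def affine_apply_def mat_def vec_def u_def divide_simps) (auto simp: algebra_simps)?
      then show ?thesis using 1 u0 uU U act_id[of "u/U"] by (simp add: v1_def vec_def)
    next
      case 2
      have "A1 i = u" using 2 ab U by (simp add: A1_def affine_apply_def mat_def vec_def u_def divide_simps) (auto simp: algebra_simps)?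
      then show ?thesis using 2 u0 act_pos[of u] by (simp add: v1_def vec_def)
    next
      case 3
      have "A1 i = u + 1" using 3 ab U by (simp add: A1_def affine_apply_def mat_def vec_def u_def divide_simps) (auto simp: algebra_simps)?
      then show ?thesis using 3 u0 act_pos[of "u+1"] by (simp add: v1_def vec_def)
    next
      case 4
      have "A1 i = u + 5/4" using 4 ab U by (simp add: A1_def affine_apply_def mat_def vec_def u_def divide_simps) (auto simp: algebra_simps)?
      then show ?thesis using 4 u0 act_pos[of "u+5/4"] by (simp add: v1_def vec_def d_def)
    qed
  qed
  define V where "V = U + 1"
  define g1 where "g1 = G0 u"
  define g2 where "g2 = G0 (u + 1)"
  have g1: "0 \<le> g1" "g1 \<le> U" using G0_nonneg[OF u0] G0_le[OF u0] uU by (auto simp: g1_def)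
  have g2: "0 \<le> g2" "g2 \<le> U + 1" using G0_nonneg[of "u+1"] G0_le[of "u+1"] u0 uU by (auto simp: g2_def)
  define v2 where "v2 = vec [g1/V, sigma1 g1, g2/V, sigma1 g2, d, \<bar>d - 5/8\<bar>, \<bar>3/8 - d\<bar>]"
  define A2 where "A2 = affine_apply 4 (mat [[U/(U+1), -1/(U+1), 0, 0], [U, -1, 0, 0], [U/(U+1), 0, -1/(U+1), 0], [U, 0, -1, 0],
        [0,0,0,1], [0,0,0,1], [0,0,0,-1]])
     (vec [0, 0, 1/(U+1), 1, 0, 11/8, 19/8]) v1"
  have st2: "\<forall>i<7. v2 i = act (A2 i)"
  proof (intro allI impI)
    fix i :: nat assume "i < 7"
    then consider "i = 0" | "i = 1" | "i = 2" | "i = 3" | "i = 4" | "i = 5" | "i = 6" using less7 by blast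
    then show "v2 i = act (A2 i)"
    proof cases
      case 1
      have "A2 i = g1/V" using 1 U by (simp add: A2_def v1_def affine_apply_def mat_def vec_def g1_def G0_def V_def eval_nat_numeral divide_simps) (auto simp: algebra_simps)?
      then show ?thesis using 1 g1 U act_id[of "g1/V"] by (simp add: v2_def vec_def V_def)
    next
      case 2
      have "A2 i = g1" using 2 U by (simp add: A2_def v1_def affine_apply_def mat_def vec_def g1_def G0_def V_def eval_nat_numeral divide_simps) (auto simp: algebra_simps)?
      then show ?thesis using 2 g1 act_pos[of g1] by (simp add: v2_def vec_def)
    next
      case 3
      have "A2 i = g2/V" using 3 U by (simp add: A2_def v1_def affine_apply_def mat_def vec_def g2_def G0_def V_def eval_nat_numeral divide_simps) (auto simp: algebra_simps)?
      then show ?thesis using 3 g2 U act_id[of "g2/V"] by (simp add: v2_def vec_def V_def)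
    next
      case 4
      have "A2 i = g2" using 4 U by (simp add: A2_def v1_def affine_apply_def mat_def vec_def g2_def G0_def V_def eval_nat_numeral divide_simps) (auto simp: algebra_simps)?
      then show ?thesis using 4 g2 act_pos[of g2] by (simp add: v2_def vec_def)
    next
      case 5
      have "A2 i = d" using 5 U by (simp add: A2_def v1_def affine_apply_def mat_def vec_def eval_nat_numeral)
      then show ?thesis using 5 d01 act_id[of d] by (simp add: v2_def vec_def)
    next
      case 6
      have "A2 i = (d - 5/8) + 2" using 6 U by (simp add: A2_def v1_def affine_apply_def mat_def vec_def eval_nat_numeral)
      then show ?thesis using 6 d01 act_abs[of "d - 5/8"] by (simp add: v2_def vec_def)
    next
      case 7
      have "A2 i = (3/8 - d) + 2" using 7 U by (simp add: A2_def v1_def affine_apply_def mat_def vec_def eval_nat_numeral)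
      then show ?thesis using 7 d01 act_abs[of "3/8 - d"] by (simp add: v2_def vec_def)
    qed
  qed
  define r1 where "r1 = 4/3 * (d - 5/8 + \<bar>d - 5/8\<bar>)"
  define r2 where "r2 = 4/3 * (3/8 - d + \<bar>3/8 - d\<bar>)"
  have r1: "0 \<le> r1" "r1 \<le> 1" using d01 by (auto simp: r1_def abs_if)
  have r2: "0 \<le> r2" "r2 \<le> 1" using d01 by (auto simp: r2_def abs_if)
  have G1: "0 \<le> G0 g1" using G0_nonneg[OF g1(1)] .
  have G2: "0 \<le> G0 g2" using G0_nonneg[OF g2(1)] .
  define v3 where "v3 = vec [1 / (G0 g1 / 2 + c) - 1, 1 / (G0 g2 / 2 + c) - 1, r1, r2]"
  define A3 where "A3 = affine_apply 7 (mat [[-(U+1)/2, 1/2, 0,0,0,0,0], [0,0,-(U+1)/2,1/2,0,0,0], [0,0,0,0,4/3,4/3,0], [0,0,0,0,-4/3,0,4/3]])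
     (vec [1-c, 1-c, -5/6, 1/2]) v2"
  have st3: "\<forall>i<4. v3 i = act (A3 i)"
  proof (intro allI impI)
    fix i :: nat assume "i < 4"
    then consider "i = 0" | "i = 1" | "i = 2" | "i = 3" using less4 by blast
    then show "v3 i = act (A3 i)"
    proof cases
      case 1
      have "A3 i = - (G0 g1 / 2 + c - 1)" using 1 U by (simp add: A3_def v2_def affine_apply_def mat_def vec_def G0_def V_def eval_nat_numeral divide_simps) (auto simp: algebra_simps)?
      then show ?thesis using 1 G1 c act_neg[of "G0 g1 / 2 + c - 1"] by (simp add: v3_def vec_def)
    next
      case 2
      have "A3 i = - (G0 g2 / 2 + c - 1)" using 2 U by (simp add: A3_def v2_def affine_apply_def mat_def vec_def G0_def V_def eval_nat_numeral divide_simps) (auto simp: algebra_simps)?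
      then show ?thesis using 2 G2 c act_neg[of "G0 g2 / 2 + c - 1"] by (simp add: v3_def vec_def)
    next
      case 3
      have "A3 i = r1" using 3 U by (simp add: A3_def v2_def affine_apply_def mat_def vec_def r1_def eval_nat_numeral) (auto simp: algebra_simps)?
      then show ?thesis using 3 r1 act_id[of r1] by (simp add: v3_def vec_def)
    next
      case 4
      have "A3 i = r2" using 4 U by (simp add: A3_def v2_def affine_apply_def mat_def vec_def r2_def eval_nat_numeral) (auto simp: algebra_simps)?
      then show ?thesis using 4 r2 act_id[of r2] by (simp add: v3_def vec_def)
    qed
  qed
  define AA where "AA = sigma1 (s1 / (G0 g1 / 2 + c))"
  define BB where "BB = sigma1 (s2 / (G0 g2 / 2 + c))"
  have AB: "0 \<le> AA" "AA \<le> 1" "0 \<le> BB" "BB \<le> 1" using s1_range by (auto simp: AA_def BB_def)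
  have pos1: "0 < G0 g1 / 2 + c" using G1 c by linarith
  have pos2: "0 < G0 g2 / 2 + c" using G2 c by linarith
  define v4 where "v4 = vec [AA, BB, r1, r2]"
  define A4 where "A4 = affine_apply 4 (mat [[s1,0,0,0],[0,s2,0,0],[0,0,1,0],[0,0,0,1]]) (vec [s1, s2, 0, 0]) v3"
  have st4: "\<forall>i<4. v4 i = act (A4 i)"
  proof (intro allI impI)
    fix i :: nat assume "i < 4"
    then consider "i = 0" | "i = 1" | "i = 2" | "i = 3" using less4 by blast
    then show "v4 i = act (A4 i)"
    proof cases
      case 1
      have "A4 i = s1 / (G0 g1 / 2 + c)" using 1 pos1 by (simp add: A4_def v3_def affine_apply_def mat_def vec_def eval_nat_numeral divide_simps) (auto simp: algebra_simps)?
      then show ?thesis using 1 pos1 s act_pos[of "s1 / (G0 g1 / 2 + c)"] by (simp add: v4_def vec_def AA_def)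
    next
      case 2
      have "A4 i = s2 / (G0 g2 / 2 + c)" using 2 pos2 by (simp add: A4_def v3_def affine_apply_def mat_def vec_def eval_nat_numeral divide_simps) (auto simp: algebra_simps)?
      then show ?thesis using 2 pos2 s act_pos[of "s2 / (G0 g2 / 2 + c)"] by (simp add: v4_def vec_def BB_def)
    next
      case 3
      have "A4 i = r1" using 3 by (simp add: A4_def v3_def affine_apply_def mat_def vec_def eval_nat_numeral)
      then show ?thesis using 3 r1 act_id[of r1] by (simp add: v4_def vec_def)
    next
      case 4
      have "A4 i = r2" using 4 by (simp add: A4_def v3_def affine_apply_def mat_def vec_def eval_nat_numeral)
      then show ?thesis using 4 r2 act_id[of r2] by (simp add: v4_def vec_def)
    qed
  qed
  have XX: "X = AA - 3 * r1" by (simp add: X_def AA_def g1_def r1_def field_simps)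
  have YY: "Y = BB - 3 * r2" by (simp add: Y_def BB_def g2_def r2_def field_simps)
  have XYb: "\<bar>X - Y\<bar> \<le> 4" "0 \<le> X + Y + 6" "X + Y + 6 \<le> 8" using XX YY AB r1 r2 by auto
  define v5 where "v5 = vec [\<bar>X - Y\<bar> / 4, (X + Y + 6) / 8]"
  define A5 where "A5 = affine_apply 4 (mat [[1/4,-1/4,-3/4,3/4],[1/8,1/8,-3/8,-3/8]]) (vec [2, 3/4]) v4"
  have st5: "\<forall>i<2. v5 i = act (A5 i)"
  proof (intro allI impI)
    fix i :: nat assume "i < 2"
    then consider "i = 0" | "i = 1" by linarith
    then show "v5 i = act (A5 i)"
    proof cases
      case 1
      have "A5 i = (X - Y) / 4 + 2" using 1 XX YY by (simp add: A5_def v4_def affine_apply_def mat_def vec_def eval_nat_numeral) (auto simp: algebra_simps)?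
      then show ?thesis using 1 XYb act_abs[of "(X - Y) / 4"] by (simp add: v5_def vec_def)
    next
      case 2
      have "A5 i = (X + Y + 6) / 8" using 2 XX YY by (simp add: A5_def v4_def affine_apply_def mat_def vec_def eval_nat_numeral) (auto simp: algebra_simps)?
      moreover have "act ((X + Y + 6) / 8) = (X + Y + 6) / 8" using XYb by (intro act_id) auto
      ultimately show ?thesis using 2 by (simp only: v5_def vec_def) simp
    qed
  qed
  have "net_eval 1 [lay1 a b U, lay2 U, lay3 U c, lay4 s1 s2, lay5] (vec [2*al, 4*al]) (be - 3*al)
           (\<lambda>j. if j < 1 then x else 0) = net_eval 2 [] (vec [2*al, 4*al]) (be - 3*al) v5"
    unfolding lay1_def lay2_def lay3_def lay4_def lay5_def
    by (simp only: net_step[OF st1[unfolded A1_def]] net_step[OF st2[unfolded A2_def]]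
       net_step[OF st3[unfolded A3_def]] net_step[OF st4[unfolded A4_def]] net_step[OF st5[unfolded A5_def]])
  also have "\<dots> = al * ((X + Y + \<bar>X - Y\<bar>) / 2) + be"
    by (simp add: net_nil v5_def vec_def eval_nat_numeral field_simps)
  also have "(X + Y + \<bar>X - Y\<bar>) / 2 = max X Y" by (auto simp: max_def abs_if)
  finally show ?thesis .
qed



lemma P_facts:
  fixes d :: real
  shows "-4 * (d - 5/8 + \<bar>d - 5/8\<bar>) \<le> 0" "-4 * (3/8 - d + \<bar>3/8 - d\<bar>) \<le> 0"
    "-4 * (d - 5/8 + \<bar>d - 5/8\<bar>) = 0 \<or> -4 * (3/8 - d + \<bar>3/8 - d\<bar>) = 0"
  by (auto simp: abs_if)

lemma combine_both:
  fixes P1 P2 AA BB t \<eta> :: real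
  assumes "P1 \<le> 0" "P2 \<le> 0" "P1 = 0 \<or> P2 = 0" "\<bar>AA - t\<bar> < \<eta>" "\<bar>BB - t\<bar> < \<eta>"
  shows "\<bar>max (AA + P1) (BB + P2) - t\<bar> < \<eta>"
  using assms by (auto simp: max_def abs_if split: if_splits)

lemma combine_A:
  fixes P1 P2 AA BB t \<eta> :: real
  assumes "P1 = 0" "P2 \<le> -1" "BB \<le> 1" "0 \<le> AA" "\<bar>AA - t\<bar> < \<eta>"
  shows "\<bar>max (AA + P1) (BB + P2) - t\<bar> < \<eta>"
  using assms by (auto simp: max_def)

lemma combine_B:
  fixes P1 P2 AA BB t \<eta> :: real
  assumes "P2 = 0" "P1 \<le> -1" "AA \<le> 1" "0 \<le> BB" "\<bar>BB - t\<bar> < \<eta>"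
  shows "\<bar>max (AA + P1) (BB + P2) - t\<bar> < \<eta>"
  using assms by (auto simp: max_def)

lemma clip_close:
  fixes a b x y :: real
  assumes "a \<le> x" "x \<le> b"
  shows "\<bar>x - max a (min b y)\<bar> \<le> \<bar>x - y\<bar>"
  using assms by (auto simp: max_def min_def abs_if)

theorem theorem6:
  fixes a b :: real and f :: "real \<Rightarrow> real"
  assumes "a < b" and "continuous_on {a..b} f"
  shows "\<forall>\<epsilon>>0. \<exists>phi. generated_by_net 1 36 5 phi \<and>
           (\<forall>x\<in>{a..b}. \<bar>phi (\<lambda>_. x) - f x\<bar> < \<epsilon>)"
proof (intro allI impI)
  fix \<epsilon> :: real assume ep: "\<epsilon> > 0"
  note ab = assms(1)
  have "compact (f ` {a..b})" using assms(2) by (intro compact_continuous_image) auto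
  then obtain Bd where Bd: "\<And>x. x \<in> {a..b} \<Longrightarrow> \<bar>f x\<bar> \<le> Bd"
    by (metis bounded_iff compact_imp_bounded imageI real_norm_def)
  have Bd0: "0 \<le> Bd" using Bd[of a] ab by force
  define al where "al = 2 * (Bd + 1)"
  define be where "be = - (Bd + 1)"
  have al0: "al > 0" using Bd0 by (simp add: al_def)
  define g where "g x = (f x - be) / al" for x
  have g01: "0 \<le> g x \<and> g x \<le> 1" if "x \<in> {a..b}" for x
    using Bd[OF that] al0 by (auto simp: g_def al_def be_def divide_simps abs_le_iff)
  define \<eta> where "\<eta> = \<epsilon> / al"
  have eta0: "\<eta> > 0" using ep al0 by (simp add: \<eta>_def)
  have "uniformly_continuous_on {a..b} f"
    using assms(2) by (intro compact_uniformly_continuous) auto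
  then obtain \<delta> where \<delta>0: "\<delta> > 0" and \<delta>: "\<And>x y. x \<in> {a..b} \<Longrightarrow> y \<in> {a..b} \<Longrightarrow> \<bar>y - x\<bar> < \<delta> \<Longrightarrow> \<bar>f y - f x\<bar> < \<epsilon> / 2"
    unfolding uniformly_continuous_on_def dist_real_def using ep by (metis half_gt_zero)
  have gclose: "\<bar>g y - g x\<bar> < \<eta> / 2" if "x \<in> {a..b}" "y \<in> {a..b}" "\<bar>y - x\<bar> < \<delta>" for x y
  proof -
    have "\<bar>g y - g x\<bar> = \<bar>f y - f x\<bar> / al" using al0 by (simp add: g_def diff_divide_distrib[symmetric])
    also have "\<dots> < (\<epsilon> / 2) / al" using \<delta>[OF that] al0 by (intro divide_strict_right_mono) auto
    finally show ?thesis by (simp add: \<eta>_def)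
  qed
  obtain N :: nat where N: "real N > (b - a) / \<delta>" using reals_Archimedean2 by blast
  have N0: "N > 0" using N ab \<delta>0 by (cases N) (auto simp: divide_simps)
  define U where "U = 2 * real N"
  have U0: "U > 0" using N0 by (simp add: U_def)
  have step_small: "(3/2) * (b - a) / U < \<delta>"
    using N ab \<delta>0 N0 by (simp add: U_def divide_simps) (simp add: mult.commute)
  define xc where "xc t = max a (min b (a + t * (b - a) / U))" for t
  have xc_in: "xc t \<in> {a..b}" for t using ab by (auto simp: xc_def)
  define z1 where "z1 m = g (xc (2 * real m))" for m
  define z2 where "z2 m = g (xc (2 * real m - 1))" for m
  obtain c where c1: "1 < c" and cind: "\<forall>ks::int list. length ks = Suc N \<longrightarrow>
      (\<Sum>i<Suc N. of_int (ks!i) / (real i + c)) = 0 \<longrightarrow> (\<forall>i<Suc N. ks!i = 0)"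
    using exists_c[of "Suc N"] by blast
  obtain s1 where s1: "s1 \<ge> 0" "\<forall>m\<le>N. \<bar>sigma1 (s1 / (real m + c)) - z1 m\<bar> < \<eta> / 2"
    using memo[OF c1 cind, of z1 "\<eta>/2"] g01 xc_in eta0 by (auto simp: z1_def)
  obtain s2 where s2: "s2 \<ge> 0" "\<forall>m\<le>N. \<bar>sigma1 (s2 / (real m + c)) - z2 m\<bar> < \<eta> / 2"
    using memo[OF c1 cind, of z2 "\<eta>/2"] g01 xc_in eta0 by (auto simp: z2_def)
  define Ls where "Ls = [lay1 a b U, lay2 U, lay3 U c, lay4 s1 s2, lay5]"
  define w where "w = vec [2*al, 4*al]"
  define bo where "bo = be - 3*al"
  define phi where "phi v = net_eval 1 Ls w bo (\<lambda>j. if j < 1 then v j else 0)" for v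
  show "\<exists>phi. generated_by_net 1 36 5 phi \<and> (\<forall>x\<in>{a..b}. \<bar>phi (\<lambda>_. x) - f x\<bar> < \<epsilon>)"
  proof (intro exI conjI ballI)
    show "generated_by_net 1 36 5 phi"
      unfolding generated_by_net_def
      by (rule exI[of _ Ls], rule exI[of _ w], rule exI[of _ bo])
         (simp add: Ls_def phi_def lay1_def lay2_def lay3_def lay4_def lay5_def)
    fix x assume x: "x \<in> {a..b}"
    define u where "u = U * (x - a) / (b - a)"
    define d where "d = sigma1 (u + 5/4)"
    define X where "X = sigma1 (s1 / (G0 (G0 u) / 2 + c)) - 4 * (d - 5/8 + \<bar>d - 5/8\<bar>)"
    define Y where "Y = sigma1 (s2 / (G0 (G0 (u+1)) / 2 + c)) - 4 * (3/8 - d + \<bar>3/8 - d\<bar>)"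
    have val: "phi (\<lambda>_. x) = al * max X Y + be"
      unfolding phi_def Ls_def w_def bo_def X_def Y_def d_def u_def
      using net_value[OF ab U0 c1 s1(1) s2(1), of x al be] x by simp
    have key: "\<bar>max X Y - g x\<bar> < \<eta>"
    proof -
      have u0: "0 \<le> u" using ab U0 x by (simp add: u_def)
      have uU: "u \<le> U" using ab U0 x by (simp add: u_def field_simps)
      define m where "m = nat \<lfloor>u / 2\<rfloor>"
      have mfl: "real m = of_int \<lfloor>u / 2\<rfloor>" using u0 by (simp add: m_def)
      define r where "r = u - 2 * real m"
      have r0: "0 \<le> r" and r2: "r < 2" using mfl by (simp_all add: r_def) linarith+
      have ueq: "u = 2 * real m + r" by (simp add: r_def)
      have mN: "m \<le> N" using ueq r0 uU by (simp add: U_def)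
      have xc_close: "\<bar>g (xc t) - g x\<bar> < \<eta> / 2" if "\<bar>u - t\<bar> \<le> 3/2" for t
      proof -
        have "\<bar>x - xc t\<bar> \<le> \<bar>x - (a + t * (b - a) / U)\<bar>" unfolding xc_def using x by (intro clip_close) auto
        also have "x - (a + t * (b - a) / U) = (u - t) * (b - a) / U"
          using ab U0 by (simp add: u_def field_simps)
        also have "\<bar>(u - t) * (b - a) / U\<bar> = \<bar>u - t\<bar> * (b - a) / U" using ab U0 by (simp add: abs_mult)
        also have "\<dots> \<le> (3/2) * (b - a) / U" using that ab U0 by (intro divide_right_mono mult_right_mono) auto
        finally have "\<bar>x - xc t\<bar> < \<delta>" using step_small by linarith
        then show ?thesis using gclose[OF x xc_in[of t]] by (simp add: abs_minus_commute)
      qed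
      have dr: "d = sigma1 (r + 5/4)"
        using s1_per[of "r + 5/4" "int m"] by (simp add: d_def ueq add_ac)
      define AA where "AA = sigma1 (s1 / (G0 (G0 u) / 2 + c))"
      define BB where "BB = sigma1 (s2 / (G0 (G0 (u+1)) / 2 + c))"
      define P1 where "P1 = -4 * (d - 5/8 + \<bar>d - 5/8\<bar>)"
      define P2 where "P2 = -4 * (3/8 - d + \<bar>3/8 - d\<bar>)"
      have XY: "X = AA + P1" "Y = BB + P2" by (simp_all add: X_def Y_def AA_def BB_def P1_def P2_def)
      have AB: "0 \<le> AA" "AA \<le> 1" "0 \<le> BB" "BB \<le> 1" using s1_range by (auto simp: AA_def BB_def)
      have hA: "\<bar>AA - g x\<bar> < \<eta>" if "r \<le> 3/2"
      proof -
        have "G0 (G0 u) = 2 * real m" using G0G0[OF r0 that, of m] by (simp add: ueq)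
        then have "AA = sigma1 (s1 / (real m + c))" by (simp add: AA_def)
        then have "\<bar>AA - z1 m\<bar> < \<eta> / 2" using s1(2) mN by simp
        moreover have "\<bar>z1 m - g x\<bar> < \<eta> / 2" unfolding z1_def using xc_close[of "2 * real m"] ueq r0 that by simp
        ultimately show ?thesis by linarith
      qed
      have hB: "\<bar>BB - g x\<bar> < \<eta>" if "r \<le> 1/2 \<or> 1 \<le> r"
        using that
      proof
        assume rr: "r \<le> 1/2"
        have "G0 (G0 (u + 1)) = 2 * real m" using G0G0[of "r + 1" m] r0 rr by (simp add: ueq add_ac)
        then have "BB = sigma1 (s2 / (real m + c))" by (simp add: BB_def)
        then have "\<bar>BB - z2 m\<bar> < \<eta> / 2" using s2(2) mN by simp
        moreover have "\<bar>z2 m - g x\<bar> < \<eta> / 2" unfolding z2_def using xc_close[of "2 * real m - 1"] ueq r0 rr by simp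
        ultimately show ?thesis by linarith
      next
        assume rr: "1 \<le> r"
        have mN': "Suc m \<le> N" using ueq rr uU by (simp add: U_def)
        have "G0 (G0 (u + 1)) = 2 * real (Suc m)" using G0G0[of "r - 1" "Suc m"] r2 rr by (simp add: ueq algebra_simps)
        then have "BB = sigma1 (s2 / (real (Suc m) + c))" by (simp add: BB_def add_divide_distrib)
        then have "\<bar>BB - z2 (Suc m)\<bar> < \<eta> / 2" using s2(2) mN' by blast
        moreover have "\<bar>z2 (Suc m) - g x\<bar> < \<eta> / 2" unfolding z2_def using xc_close[of "2 * real (Suc m) - 1"] ueq r2 rr by simp
        ultimately show ?thesis by linarith
      qed
      consider "r \<le> 1/2" | "1/2 \<le> r" "r \<le> 1" | "1 \<le> r" "r \<le> 3/2" | "3/2 \<le> r" by linarith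
      then show ?thesis
      proof cases
        case 1
        then show ?thesis unfolding XY using combine_both[OF P_facts[of d, folded P1_def P2_def] hA hB] by simp
      next
        case 2
        have "d = \<bar>r - 3/4\<bar>" using s1_eq[of "r + 5/4" 1] 2 by (simp add: dr abs_le_iff) 
        then have "d \<le> 1/4" using 2 by (auto simp: abs_if)
        then have "P1 = 0" "P2 \<le> -1" by (auto simp: P1_def P2_def abs_if)
        then show ?thesis unfolding XY using combine_A[OF _ _ AB(4) AB(1) hA] 2 by simp
      next
        case 3
        then show ?thesis unfolding XY using combine_both[OF P_facts[of d, folded P1_def P2_def] hA hB] by simp
      next
        case 4
        have "3/4 \<le> d"
        proof (cases "r + 5/4 \<le> 3")
          case True
          then have "d = \<bar>r - 3/4\<bar>" using s1_eq[of "r + 5/4" 1] 4 by (simp add: dr abs_le_iff)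
          then show ?thesis using 4 by simp
        next
          case False
          then have "d = \<bar>r + 5/4 - 4\<bar>" using s1_eq[of "r + 5/4" 2] 4 r2 by (simp add: dr abs_le_iff)
          then show ?thesis using False r2 by simp
        qed
        then have "P2 = 0" "P1 \<le> -1" by (auto simp: P1_def P2_def abs_if)
        then show ?thesis unfolding XY using combine_B[OF _ _ AB(2) AB(3) hB] 4 by simp
      qed
    qed
    have "\<bar>phi (\<lambda>_. x) - f x\<bar> = al * \<bar>max X Y - g x\<bar>"
    proof -
      have "al * (max X Y - g x) = phi (\<lambda>_. x) - f x" using al0 by (simp add: val g_def field_simps)
      then show ?thesis using al0 by (metis abs_mult abs_of_pos)
    qed
    also have "\<dots> < al * \<eta>" using key al0 by simp
    also have "\<dots> = \<epsilon>" using al0 by (simp add: \<eta>_def)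
    finally show "\<bar>phi (\<lambda>_. x) - f x\<bar> < \<epsilon>" .
  qed
qed


end
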